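(* Let $f:(L',\alpha_{L'})\to(L,\alpha_L)$ be an $\alpha$-cover and let $C=\mathfrak{uce}_\alpha(f)(\mathrm{Ker}\,U_{\alpha'})\subseteq\mathfrak{uce}_\alpha(L)$. For any $h\in\mathrm{Aut}(L,\alpha_L)$ there exists $\theta_h\in\mathrm{Aut}(L',\alpha_{L'})$ with $f\circ\theta_h=h\circ f$ if and only if the automorphism $\mathfrak{uce}_\alpha(h)$ of $\mathfrak{uce}_\alpha(L)$ satisfies $\mathfrak{uce}_\alpha(h)(C)=C$. In that case $\theta_h$ is uniquely determined by $f\circ\theta_h=h\circ f$ and $\theta_h(\mathrm{Ker}\,f)=\mathrm{Ker}\,f$. Moreover the map $\Theta:\{h\in\mathrm{Aut}(L,\alpha_L):\mathfrak{uce}_\alpha(h)(C)=C\}\to\{g\in\mathrm{Aut}(L',\alpha_{L'}):g(\mathrm{Ker}\,f)=\mathrm{Ker}\,f\}$, $h\mapsto\theta_h$, is a group isomorphism.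
   Context: Hom-Leibniz algebras are multiplicative: $(L,\alpha_L)$ is a $\mathbb{K}$-vector space with bilinear bracket and linear $\alpha_L$ such that $[\alpha_L(x),[y,z]]=[[x,y],\alpha_L(z)]-[[x,z],\alpha_L(y)]$ and $\alpha_L[x,y]=[\alpha_L(x),\alpha_L(y)]$; homomorphisms preserve brackets and commute with structure maps; $\mathrm{Aut}(L,\alpha_L)$ is the group of bijective homomorphisms $L\to L$. $Z(K)=\{x:[x,y]=0=[y,x]\ \forall y\}$. $(L,\alpha_L)$ is $\alpha$-perfect if $L=[\alpha_L(L),\alpha_L(L)]$. A central extension is a surjective homomorphism $\pi$ with $\mathrm{Ker}\,\pi\subseteq Z(K)$. An $\alpha$-cover is a central extension $f:(L',\alpha_{L'})\to(L,\alpha_L)$ with $(L',\alpha_{L'})$ $\alpha$-perfect (then $L$ is $\alpha$-perfect too). For $\alpha$-perfect $(L,\alpha_L)$: $I_L\subseteq\alpha_L(L)\otimes\alpha_L(L)$ is spanned by $-[x_1,x_2]\otimes\alpha_L(x_3)+[x_1,x_3]\otimes\alpha_L(x_2)+\alpha_L(x_1)\otimes[x_2,x_3]$; $\mathfrak{uce}_\alpha(L)=(\alpha_L(L)\otimes\alpha_L(L))/I_L$ with classes $\{\alpha_L(x_1),\alpha_L(x_2)\}$, bracket $[\{a,b\},\{c,e\}]=\{[a,b],[c,e]\}$, endomorphism $\overline{\alpha}\{\alpha_L(x_1),\alpha_L(x_2)\}=\{\alpha_L^2(x_1),\alpha_L^2(x_2)\}$, and $U_\alpha:\mathfrak{uce}_\alpha(L)\to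 L$, $U_\alpha\{a,b\}=[a,b]$ (the universal $\alpha$-central extension of $L$); $U_{\alpha'}$ is the same for $L'$. For a homomorphism $g$ of $\alpha$-perfect algebras, $\mathfrak{uce}_\alpha(g)\{\alpha(x_1),\alpha(x_2)\}=\{\alpha(g(x_1)),\alpha(g(x_2))\}$. *)

theory Defs
  imports Main "HOL.Vector_Spaces"
begin

definition hom_leibniz ::
  "('k::field \<Rightarrow> 'a::ab_group_add \<Rightarrow> 'a) \<Rightarrow> ('a \<Rightarrow> 'a \<Rightarrow> 'a) \<Rightarrow> ('a \<Rightarrow> 'a) \<Rightarrow> bool" where
  "hom_leibniz s br al \<longleftrightarrow>
     vector_space s \<and>
     (\<forall>x. Vector_Spaces.linear s s (br x)) \<and> (\<forall>y. Vector_Spaces.linear s s (\<lambda>x. br x y)) \<and>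
     Vector_Spaces.linear s s al \<and>
     (\<forall>x y z. br (al x) (br y z) = br (br x y) (al z) - br (br x z) (al y)) \<and>
     (\<forall>x y. al (br x y) = br (al x) (al y))"

definition hl_hom ::
  "('k::field \<Rightarrow> 'b::ab_group_add \<Rightarrow> 'b) \<Rightarrow> ('b \<Rightarrow> 'b \<Rightarrow> 'b) \<Rightarrow> ('b \<Rightarrow> 'b) \<Rightarrow>
   ('k \<Rightarrow> 'a::ab_group_add \<Rightarrow> 'a) \<Rightarrow> ('a \<Rightarrow> 'a \<Rightarrow> 'a) \<Rightarrow> ('a \<Rightarrow> 'a) \<Rightarrow> ('b \<Rightarrow> 'a) \<Rightarrow> bool" where
  "hl_hom s1 br1 al1 s2 br2 al2 g \<longleftrightarrow>
     Vector_Spaces.linear s1 s2 g \<and> (\<forall>x y. g (br1 x y) = br2 (g x) (g y)) \<and> g \<circ> al1 = al2 \<circ> g"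

definition hl_Aut ::
  "('k::field \<Rightarrow> 'a::ab_group_add \<Rightarrow> 'a) \<Rightarrow> ('a \<Rightarrow> 'a \<Rightarrow> 'a) \<Rightarrow> ('a \<Rightarrow> 'a) \<Rightarrow> ('a \<Rightarrow> 'a) set" where
  "hl_Aut s br al = {g. hl_hom s br al s br al g \<and> bij g}"

definition hl_center :: "('a \<Rightarrow> 'a \<Rightarrow> 'a::ab_group_add) \<Rightarrow> 'a set" where
  "hl_center br = {x. \<forall>y. br x y = 0 \<and> br y x = 0}"

definition hl_ker :: "('b \<Rightarrow> 'a::zero) \<Rightarrow> 'b set" where
  "hl_ker g = {x. g x = 0}"

definition alpha_perfect ::
  "('k::field \<Rightarrow> 'a::ab_group_add \<Rightarrow> 'a) \<Rightarrow> ('a \<Rightarrow> 'a \<Rightarrow> 'a) \<Rightarrow> ('a \<Rightarrow> 'a) \<Rightarrow> bool" where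
  "alpha_perfect s br al \<longleftrightarrow> module.span s {br (al x) (al y) | x y. True} = UNIV"

definition central_extension ::
  "('k::field \<Rightarrow> 'b::ab_group_add \<Rightarrow> 'b) \<Rightarrow> ('b \<Rightarrow> 'b \<Rightarrow> 'b) \<Rightarrow> ('b \<Rightarrow> 'b) \<Rightarrow>
   ('k \<Rightarrow> 'a::ab_group_add \<Rightarrow> 'a) \<Rightarrow> ('a \<Rightarrow> 'a \<Rightarrow> 'a) \<Rightarrow> ('a \<Rightarrow> 'a) \<Rightarrow> ('b \<Rightarrow> 'a) \<Rightarrow> bool" where
  "central_extension s1 br1 al1 s2 br2 al2 g \<longleftrightarrow>
     hl_hom s1 br1 al1 s2 br2 al2 g \<and> surj g \<and> hl_ker g \<subseteq> hl_center br1"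

definition alpha_cover ::
  "('k::field \<Rightarrow> 'b::ab_group_add \<Rightarrow> 'b) \<Rightarrow> ('b \<Rightarrow> 'b \<Rightarrow> 'b) \<Rightarrow> ('b \<Rightarrow> 'b) \<Rightarrow>
   ('k \<Rightarrow> 'a::ab_group_add \<Rightarrow> 'a) \<Rightarrow> ('a \<Rightarrow> 'a \<Rightarrow> 'a) \<Rightarrow> ('a \<Rightarrow> 'a) \<Rightarrow> ('b \<Rightarrow> 'a) \<Rightarrow> bool" where
  "alpha_cover s1 br1 al1 s2 br2 al2 g \<longleftrightarrow>
     central_extension s1 br1 al1 s2 br2 al2 g \<and> alpha_perfect s1 br1 al1"

text \<open>Formal finite K-linear combinations of pairs (x,y), i.e. the free vector
 space on L x L, represented as finitely supported functions.\<close>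

definition fsupp :: "('x \<Rightarrow> 'k::zero) \<Rightarrow> 'x set" where
  "fsupp c = {p. c p \<noteq> 0}"

definition FSall :: "('x \<times> 'x \<Rightarrow> 'k::zero) set" where
  "FSall = {c. finite (fsupp c)}"

definition fdelta :: "'x \<Rightarrow> 'x \<Rightarrow> ('x \<times> 'x \<Rightarrow> 'k::{zero,one})" where
  "fdelta a b = (\<lambda>p. if p = (a, b) then 1 else 0)"

definition fspan :: "('x \<times> 'x \<Rightarrow> 'k::field) set \<Rightarrow> ('x \<times> 'x \<Rightarrow> 'k) set" where
  "fspan S = {v. \<exists>(n::nat) (cs::nat \<Rightarrow> 'k) vs.
                  (\<forall>i<n. vs i \<in> S) \<and> v = (\<lambda>p. \<Sum>i<n. cs i * vs i p)}"

text \<open>Bilinearity relations: their span is the kernel of the free space onto L (x) L.\<close>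
definition tens_rel :: "('k::field \<Rightarrow> 'a::ab_group_add \<Rightarrow> 'a) \<Rightarrow> ('a \<times> 'a \<Rightarrow> 'k) set" where
  "tens_rel s =
     {(\<lambda>p. fdelta (a + a') b p - fdelta a b p - fdelta a' b p) | a a' b. True} \<union>
     {(\<lambda>p. fdelta a (b + b') p - fdelta a b p - fdelta a b' p) | a b b'. True} \<union>
     {(\<lambda>p. fdelta (s c a) b p - c * fdelta a b p) | c a b. True} \<union>
     {(\<lambda>p. fdelta a (s c b) p - c * fdelta a b p) | c a b. True}"

definition I_gen :: "('a \<Rightarrow> 'a \<Rightarrow> 'a) \<Rightarrow> ('a \<Rightarrow> 'a) \<Rightarrow> ('a \<times> 'a \<Rightarrow> 'k::field) set" where
  "I_gen br al =
     {(\<lambda>p. - fdelta (br x1 x2) (al x3) p + fdelta (br x1 x3) (al x2) p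
            + fdelta (al x1) (br x2 x3) p) | x1 x2 x3. True}"

definition uce_rel ::
  "('k::field \<Rightarrow> 'a::ab_group_add \<Rightarrow> 'a) \<Rightarrow> ('a \<Rightarrow> 'a \<Rightarrow> 'a) \<Rightarrow> ('a \<Rightarrow> 'a) \<Rightarrow> ('a \<times> 'a \<Rightarrow> 'k) set" where
  "uce_rel s br al = fspan (tens_rel s \<union> I_gen br al)"

text \<open>Formal combinations of pairs from al(L) x al(L) (representing al(L) (x) al(L)).\<close>
definition FreeA :: "('a \<Rightarrow> 'a) \<Rightarrow> ('a \<times> 'a \<Rightarrow> 'k::zero) set" where
  "FreeA al = {c \<in> FSall. \<forall>p. c p \<noteq> 0 \<longrightarrow> fst p \<in> range al \<and> snd p \<in> range al}"

definition ucls ::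
  "('k::field \<Rightarrow> 'a::ab_group_add \<Rightarrow> 'a) \<Rightarrow> ('a \<Rightarrow> 'a \<Rightarrow> 'a) \<Rightarrow> ('a \<Rightarrow> 'a) \<Rightarrow>
   ('a \<times> 'a \<Rightarrow> 'k) \<Rightarrow> ('a \<times> 'a \<Rightarrow> 'k) set" where
  "ucls s br al v = {w \<in> FSall. (\<lambda>p. v p - w p) \<in> uce_rel s br al}"

text \<open>The carrier of uce_alpha(L) = (al(L) (x) al(L)) / I_L.\<close>
definition uce_set ::
  "('k::field \<Rightarrow> 'a::ab_group_add \<Rightarrow> 'a) \<Rightarrow> ('a \<Rightarrow> 'a \<Rightarrow> 'a) \<Rightarrow> ('a \<Rightarrow> 'a) \<Rightarrow>
   ('a \<times> 'a \<Rightarrow> 'k) set set" where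
  "uce_set s br al = ucls s br al ` FreeA al"

definition fpush :: "('b \<Rightarrow> 'a) \<Rightarrow> ('b \<times> 'b \<Rightarrow> 'k::comm_monoid_add) \<Rightarrow> ('a \<times> 'a \<Rightarrow> 'k)" where
  "fpush g c = (\<lambda>q. \<Sum>p \<in> {p. c p \<noteq> 0 \<and> (g (fst p), g (snd p)) = q}. c p)"

text \<open>uce_alpha(g): {al(x1),al(x2)} |-> {al(g x1), al(g x2)} = {g(al x1), g(al x2)},
  extended linearly; computed on a representative.\<close>
definition uce_map ::
  "('b \<Rightarrow> 'b) \<Rightarrow> ('k::field \<Rightarrow> 'a::ab_group_add \<Rightarrow> 'a) \<Rightarrow> ('a \<Rightarrow> 'a \<Rightarrow> 'a) \<Rightarrow> ('a \<Rightarrow> 'a) \<Rightarrow>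
   ('b \<Rightarrow> 'a) \<Rightarrow> ('b \<times> 'b \<Rightarrow> 'k) set \<Rightarrow> ('a \<times> 'a \<Rightarrow> 'k) set" where
  "uce_map al1 s2 br2 al2 g X = ucls s2 br2 al2 (fpush g (SOME v. v \<in> X \<inter> FreeA al1))"

text \<open>U_alpha: {a,b} |-> [a,b], extended linearly; computed on a representative.\<close>
definition uce_U ::
  "('k::field \<Rightarrow> 'a::ab_group_add \<Rightarrow> 'a) \<Rightarrow> ('a \<Rightarrow> 'a \<Rightarrow> 'a) \<Rightarrow> ('a \<Rightarrow> 'a) \<Rightarrow>
   ('a \<times> 'a \<Rightarrow> 'k) set \<Rightarrow> 'a" where
  "uce_U s br al X =
     (let v = SOME v. v \<in> X \<inter> FreeA al in \<Sum>p \<in> fsupp v. s (v p) (br (fst p) (snd p)))"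

definition uce_ker ::
  "('k::field \<Rightarrow> 'a::ab_group_add \<Rightarrow> 'a) \<Rightarrow> ('a \<Rightarrow> 'a \<Rightarrow> 'a) \<Rightarrow> ('a \<Rightarrow> 'a) \<Rightarrow>
   ('a \<times> 'a \<Rightarrow> 'k) set set" where
  "uce_ker s br al = {X \<in> uce_set s br al. uce_U s br al X = 0}"

end

theory Submission
  imports Defs
begin


lemma fspan_zero: "(\<lambda>p. 0) \<in> fspan S"
  unfolding fspan_def by (rule CollectI, rule exI[of _ 0]) auto

lemma fspan_cons:
  assumes w: "w \<in> fspan S" and x: "x \<in> S"
  shows "(\<lambda>p. c * x p + w p) \<in> fspan S"
proof -
  from w obtain n :: nat and cs vs where vs: "\<forall>i<n. vs i \<in> S" and wdef: "w = (\<lambda>p. \<Sum>i<n. cs i * vs i p)"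
    unfolding fspan_def mem_Collect_eq by (elim exE conjE) blast
  have "(\<lambda>p. c * x p + w p) = (\<lambda>p. \<Sum>i<Suc n. (cs(n:=c)) i * (vs(n:=x)) i p)"
    by (simp add: wdef add.commute)
  moreover have "\<forall>i<Suc n. (vs(n:=x)) i \<in> S" using vs x by (auto simp: less_Suc_eq)
  ultimately show ?thesis unfolding fspan_def by blast
qed

lemma fspan_induct[consumes 1, case_names zero step]:
  assumes v: "v \<in> fspan S" and z: "P (\<lambda>p. 0)"
    and st: "\<And>c x w. x \<in> S \<Longrightarrow> w \<in> fspan S \<Longrightarrow> P w \<Longrightarrow> P (\<lambda>p. c * x p + w p)"
  shows "P v"
proof -
  from v obtain n :: nat and cs vs where vs: "\<forall>i<n. vs i \<in> S" and wdef: "v = (\<lambda>p. \<Sum>i<n. cs i * vs i p)"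
    unfolding fspan_def mem_Collect_eq by (elim exE conjE) blast
  have "(\<lambda>p. \<Sum>i<m. cs i * vs i p) \<in> fspan S \<and> P (\<lambda>p. \<Sum>i<m. cs i * vs i p)" if "m \<le> n" for m
    using that
  proof (induction m)
    case 0 then show ?case using z fspan_zero by simp
  next
    case (Suc m)
    then have IH: "(\<lambda>p. \<Sum>i<m. cs i * vs i p) \<in> fspan S" "P (\<lambda>p. \<Sum>i<m. cs i * vs i p)" by auto
    have eq: "(\<lambda>p. \<Sum>i<Suc m. cs i * vs i p) = (\<lambda>p. cs m * vs m p + (\<Sum>i<m. cs i * vs i p))"
      by (simp add: add.commute)
    have "vs m \<in> S" using vs Suc by auto
    then show ?case unfolding eq using IH st fspan_cons by blast
  qed
  then show ?thesis using wdef by simp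
qed

lemma fspan_base: "x \<in> S \<Longrightarrow> x \<in> fspan S"
  using fspan_cons[OF fspan_zero, of x S 1] by simp

lemma fspan_add:
  assumes v: "v \<in> fspan S" and w: "w \<in> fspan S"
  shows "(\<lambda>p. v p + w p) \<in> fspan S"
  using v
proof (induction v rule: fspan_induct)
  case zero then show ?case using w by simp
next
  case (step c x u)
  have "(\<lambda>p. c * x p + u p + w p) = (\<lambda>p. c * x p + (u p + w p))" by (simp add: add.assoc)
  moreover have "(\<lambda>p. c * x p + (u p + w p)) \<in> fspan S" by (rule fspan_cons[OF step(3) step(1)])
  ultimately show ?case by simp
qed

lemma fspan_scale:
  assumes v: "v \<in> fspan S"
  shows "(\<lambda>p. a * v p) \<in> fspan S"
  using v
proof (induction v rule: fspan_induct)
  case zero then show ?case using fspan_zero by simp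
next
  case (step c x u)
  have "(\<lambda>p. a * (c * x p + u p)) = (\<lambda>p. (a * c) * x p + a * u p)" by (simp add: algebra_simps)
  moreover have "(\<lambda>p. (a * c) * x p + a * u p) \<in> fspan S" by (rule fspan_cons[OF step(3) step(1)])
  ultimately show ?case by simp
qed

lemma fspan_neg: "v \<in> fspan S \<Longrightarrow> (\<lambda>p. - v p) \<in> fspan S"
  using fspan_scale[of v S "-1"] by simp

lemma fspan_diff: "v \<in> fspan S \<Longrightarrow> w \<in> fspan S \<Longrightarrow> (\<lambda>p. v p - w p) \<in> fspan S"
proof -
  assume v: "v \<in> fspan S" and w: "w \<in> fspan S"
  have "(\<lambda>p. v p - w p) = (\<lambda>p. v p + - w p)" by simp
  then show ?thesis using fspan_add[OF v fspan_neg[OF w]] by simp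
qed

lemma fspan_finite:
  assumes "v \<in> fspan S" "\<And>x. x \<in> S \<Longrightarrow> finite (fsupp x)" shows "finite (fsupp v)"
  using assms(1)
proof (induction v rule: fspan_induct)
  case zero then show ?case by (simp add: fsupp_def)
next
  case (step c x w)
  have "fsupp (\<lambda>p. c * x p + w p) \<subseteq> fsupp x \<union> fsupp w" by (auto simp: fsupp_def)
  moreover have "finite (fsupp x)" using step(1) assms(2) by blast
  ultimately show ?case using step(3) by (simp add: finite_subset)
qed



definition Psum :: "('k::comm_ring_1 \<Rightarrow> 'a::ab_group_add \<Rightarrow> 'a) \<Rightarrow> ('x \<times> 'x \<Rightarrow> 'k) \<Rightarrow> ('x \<times> 'x \<Rightarrow> 'a) \<Rightarrow> 'a"
  where "Psum s u \<phi> = (\<Sum>q\<in>fsupp u. s (u q) (\<phi> q))"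

abbreviation pmap :: "('x \<Rightarrow> 'y) \<Rightarrow> 'x \<times> 'x \<Rightarrow> 'y \<times> 'y" where
  "pmap g p \<equiv> (g (fst p), g (snd p))"

lemma fsupp_fdelta: "fsupp (fdelta a b :: _ \<Rightarrow> 'k::zero_neq_one) = {(a,b)}"
  by (auto simp: fsupp_def fdelta_def)

lemma fpush_superset:
  assumes "finite S" "fsupp c \<subseteq> S"
  shows "fpush g c q = (\<Sum>p\<in>{p\<in>S. pmap g p = q}. c p)"
  unfolding fpush_def
  by (rule sum.mono_neutral_left) (use assms in \<open>auto simp: fsupp_def\<close>)

lemma fsupp_fpush: "fsupp (fpush g c) \<subseteq> pmap g ` fsupp c"
proof
  fix q assume "q \<in> fsupp (fpush g c)"
  then have "fpush g c q \<noteq> 0" by (simp add: fsupp_def)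
  then have "{p. c p \<noteq> 0 \<and> pmap g p = q} \<noteq> {}" unfolding fpush_def by (metis (no_types, lifting) sum.empty)
  then obtain p where "c p \<noteq> 0" "pmap g p = q" by blast
  then show "q \<in> pmap g ` fsupp c" by (simp add: fsupp_def rev_image_eqI)
qed

lemma finite_fpush: "finite (fsupp c) \<Longrightarrow> finite (fsupp (fpush g c))"
  using fsupp_fpush finite_subset by blast

lemma fpush_add:
  fixes u v :: "_ \<Rightarrow> 'k::comm_ring_1"
  assumes "finite (fsupp u)" "finite (fsupp v)"
  shows "fpush g (\<lambda>p. u p + v p) = (\<lambda>q. fpush g u q + fpush g v q)"
proof
  fix q
  let ?S = "fsupp u \<union> fsupp v"
  have s: "fsupp (\<lambda>p. u p + v p) \<subseteq> ?S" by (auto simp: fsupp_def)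
  have f: "finite ?S" using assms by auto
  show "fpush g (\<lambda>p. u p + v p) q = fpush g u q + fpush g v q"
    using f s by (simp add: fpush_superset[OF f s] fpush_superset[OF f] sum.distrib)
qed

lemma fpush_scale:
  fixes u :: "_ \<Rightarrow> 'k::comm_ring_1"
  assumes "finite (fsupp u)"
  shows "fpush g (\<lambda>p. a * u p) = (\<lambda>q. a * fpush g u q)"
proof
  fix q
  have s: "fsupp (\<lambda>p. a * u p) \<subseteq> fsupp u" by (auto simp: fsupp_def)
  show "fpush g (\<lambda>p. a * u p) q = a * fpush g u q"
    by (simp add: fpush_superset[OF assms s] fpush_superset[OF assms] sum_distrib_left)
qed

lemma fpush_neg:
  fixes u :: "_ \<Rightarrow> 'k::comm_ring_1"
  assumes "finite (fsupp u)"
  shows "fpush g (\<lambda>p. - u p) = (\<lambda>q. - fpush g u q)"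
  using fpush_scale[OF assms, of g "-1"] by simp

lemma fpush_diff:
  fixes u v :: "_ \<Rightarrow> 'k::comm_ring_1"
  assumes "finite (fsupp u)" "finite (fsupp v)"
  shows "fpush g (\<lambda>p. u p - v p) = (\<lambda>q. fpush g u q - fpush g v q)"
proof -
  have "finite (fsupp (\<lambda>p. - v p))" using assms(2) by (simp add: fsupp_def)
  then show ?thesis
    using fpush_add[OF assms(1), of "\<lambda>p. - v p" g] fpush_neg[OF assms(2), of g] by simp
qed

lemma fpush_zero: "fpush g (\<lambda>p. 0::'k::comm_ring_1) = (\<lambda>q. 0)"
  by (simp add: fpush_def)

lemma fpush_delta: "fpush g (fdelta a b :: _ \<Rightarrow> 'k::comm_ring_1) = fdelta (g a) (g b)"
proof
  fix q
  have f: "finite {(a,b)}" by simp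
  have "fpush g (fdelta a b :: _ \<Rightarrow> 'k) q = (\<Sum>p\<in>{p\<in>{(a,b)}. pmap g p = q}. fdelta a b p)"
    by (rule fpush_superset) (simp_all add: fsupp_fdelta)
  also have "{p\<in>{(a,b)}. pmap g p = q} = (if q = (g a, g b) then {(a,b)} else {})" by auto
  finally show "fpush g (fdelta a b :: _ \<Rightarrow> 'k) q = fdelta (g a) (g b) q"
    by (simp add: fdelta_def)
qed

lemma fpush_comp:
  fixes c :: "_ \<Rightarrow> 'k::comm_ring_1"
  assumes fin: "finite (fsupp c)"
  shows "fpush g (fpush h c) = fpush (g \<circ> h) c"
proof
  fix q
  let ?S = "fsupp c"
  have f2: "finite (pmap h ` ?S)" using fin by simp
  have "fpush g (fpush h c) q = (\<Sum>p\<in>{p\<in>pmap h ` ?S. pmap g p = q}. fpush h c p)"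
    by (rule fpush_superset[OF f2 fsupp_fpush])
  also have "\<dots> = (\<Sum>p\<in>{p\<in>pmap h ` ?S. pmap g p = q}. \<Sum>p'\<in>{p'\<in>?S. pmap h p' = p}. c p')"
    by (simp add: fpush_superset[OF fin])
  also have "\<dots> = (\<Sum>p\<in>pmap h ` ?S. \<Sum>p'\<in>{p'\<in>?S. pmap h p' = p}. if pmap g (pmap h p') = q then c p' else 0)"
    by (rule sum.mono_neutral_cong_left) (use f2 in auto)
  also have "\<dots> = (\<Sum>p'\<in>?S. if pmap g (pmap h p') = q then c p' else 0)"
    by (rule sum.image_gen[symmetric]) (use fin in auto)
  also have "\<dots> = (\<Sum>p'\<in>{p'\<in>?S. pmap (g \<circ> h) p' = q}. c p')"
    using fin by (simp add: sum.inter_filter)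
  also have "\<dots> = fpush (g \<circ> h) c q"
    by (rule fpush_superset[OF fin, symmetric]) simp
  finally show "fpush g (fpush h c) q = fpush (g \<circ> h) c q" .
qed

lemma fpush_id:
  fixes c :: "_ \<Rightarrow> 'k::comm_ring_1"
  assumes fin: "finite (fsupp c)"
  shows "fpush (\<lambda>x. x) c = c"
proof
  fix q
  show "fpush (\<lambda>x. x) c q = c q"
  proof -
    have "{p. c p \<noteq> 0 \<and> pmap (\<lambda>x. x) p = q} = (if c q = 0 then {} else {q})" by auto
    then show ?thesis unfolding fpush_def by simp
  qed
qed

context module begin

lemma Psum_superset:
  assumes "finite S" "fsupp u \<subseteq> S"
  shows "Psum scale u \<phi> = (\<Sum>q\<in>S. u q *s \<phi> q)"
  unfolding Psum_def
  by (rule sum.mono_neutral_left) (use assms in \<open>auto simp: fsupp_def\<close>)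

lemma Psum_add:
  assumes "finite (fsupp u)" "finite (fsupp v)"
  shows "Psum scale (\<lambda>p. u p + v p) \<phi> = Psum scale u \<phi> + Psum scale v \<phi>"
proof -
  let ?S = "fsupp u \<union> fsupp v"
  have s: "fsupp (\<lambda>p. u p + v p) \<subseteq> ?S" by (auto simp: fsupp_def)
  have f: "finite ?S" using assms by auto
  show ?thesis
    by (simp add: Psum_superset[OF f s] Psum_superset[OF f] scale_left_distrib sum.distrib)
qed

lemma Psum_scale:
  assumes "finite (fsupp u)"
  shows "Psum scale (\<lambda>p. a * u p) \<phi> = a *s Psum scale u \<phi>"
proof -
  have s: "fsupp (\<lambda>p. a * u p) \<subseteq> fsupp u" by (auto simp: fsupp_def)
  show ?thesis
    by (simp add: Psum_superset[OF assms s] Psum_superset[OF assms] scale_sum_right)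
qed

lemma Psum_neg:
  assumes "finite (fsupp u)"
  shows "Psum scale (\<lambda>p. - u p) \<phi> = - Psum scale u \<phi>"
  using Psum_scale[OF assms, of "-1"] by simp

lemma Psum_diff:
  assumes "finite (fsupp u)" "finite (fsupp v)"
  shows "Psum scale (\<lambda>p. u p - v p) \<phi> = Psum scale u \<phi> - Psum scale v \<phi>"
proof -
  have "finite (fsupp (\<lambda>p. - v p))" using assms(2) by (simp add: fsupp_def)
  then show ?thesis
    using Psum_add[OF assms(1), of "\<lambda>p. - v p"] Psum_neg[OF assms(2)] by simp
qed

lemma Psum_zero: "Psum scale (\<lambda>p. 0) \<phi> = 0"
  by (simp add: Psum_def fsupp_def)

lemma Psum_delta: "Psum scale (fdelta a b) \<phi> = \<phi> (a, b)"
  unfolding Psum_def fsupp_fdelta by (simp add: fdelta_def)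

lemma Psum_cong: "(\<And>q. q \<in> fsupp u \<Longrightarrow> \<phi> q = \<psi> q) \<Longrightarrow> Psum scale u \<phi> = Psum scale u \<psi>"
  unfolding Psum_def by simp

lemma Psum_push:
  assumes fin: "finite (fsupp u)"
  shows "Psum scale (fpush g u) \<phi> = Psum scale u (\<lambda>p. \<phi> (pmap g p))"
proof -
  let ?S = "fsupp u"
  have f2: "finite (pmap g ` ?S)" using fin by simp
  have "Psum scale (fpush g u) \<phi> = (\<Sum>q\<in>pmap g ` ?S. fpush g u q *s \<phi> q)"
    by (rule Psum_superset[OF f2 fsupp_fpush])
  also have "\<dots> = (\<Sum>q\<in>pmap g ` ?S. \<Sum>p\<in>{p\<in>?S. pmap g p = q}. u p *s \<phi> (pmap g p))"
    by (simp add: fpush_superset[OF fin] scale_sum_left)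
  also have "\<dots> = (\<Sum>p\<in>?S. u p *s \<phi> (pmap g p))"
    by (rule sum.image_gen[symmetric]) (use fin in auto)
  also have "\<dots> = Psum scale u (\<lambda>p. \<phi> (pmap g p))" by (simp add: Psum_def)
  finally show ?thesis .
qed

end

lemma linear_Psum:
  assumes "Vector_Spaces.linear s1 s2 g"
  shows "g (Psum s1 u \<phi>) = Psum s2 u (\<lambda>q. g (\<phi> q))"
proof -
  interpret linear s1 s2 g by fact
  show ?thesis unfolding Psum_def by (simp add: sum scale)
qed



lemma fin_delta[simp]: "finite (fsupp (fdelta a b :: _ \<Rightarrow> 'k::zero_neq_one))"
  by (simp add: fsupp_fdelta)

lemma fin_add[simp]: "finite (fsupp u) \<Longrightarrow> finite (fsupp v) \<Longrightarrow> finite (fsupp (\<lambda>p. u p + v p :: 'k::comm_ring_1))"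
  by (rule finite_subset[of _ "fsupp u \<union> fsupp v"]) (auto simp: fsupp_def)

lemma fin_diff[simp]: "finite (fsupp u) \<Longrightarrow> finite (fsupp v) \<Longrightarrow> finite (fsupp (\<lambda>p. u p - v p :: 'k::comm_ring_1))"
  by (rule finite_subset[of _ "fsupp u \<union> fsupp v"]) (auto simp: fsupp_def)

lemma fin_neg[simp]: "finite (fsupp u) \<Longrightarrow> finite (fsupp (\<lambda>p. - u p :: 'k::comm_ring_1))"
  by (simp add: fsupp_def)

lemma fin_scale[simp]: "finite (fsupp u) \<Longrightarrow> finite (fsupp (\<lambda>p. c * u p :: 'k::comm_ring_1))"
  by (rule finite_subset[of _ "fsupp u"]) (auto simp: fsupp_def)

lemma gens_finite: "x \<in> tens_rel s \<union> I_gen br al \<Longrightarrow> finite (fsupp x)"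
  unfolding tens_rel_def I_gen_def by (elim UnE CollectE exE conjE; simp)

lemma R_finite: "x \<in> uce_rel s br al \<Longrightarrow> finite (fsupp x)"
  unfolding uce_rel_def using fspan_finite gens_finite by blast

lemma fpush_gen3: "fpush g (\<lambda>p. fdelta a b p - fdelta c d p - fdelta e h p :: 'k::comm_ring_1)
   = (\<lambda>q. fdelta (g a) (g b) q - fdelta (g c) (g d) q - fdelta (g e) (g h) q)"
  by (simp add: fpush_diff fpush_delta)

lemma fpush_gen2: "fpush g (\<lambda>p. fdelta a b p - k * fdelta c d p :: 'k::comm_ring_1)
   = (\<lambda>q. fdelta (g a) (g b) q - k * fdelta (g c) (g d) q)"
  by (simp add: fpush_diff fpush_scale fpush_delta)

lemma fpush_genI: "fpush g (\<lambda>p. - fdelta a b p + fdelta c d p + fdelta e h p :: 'k::comm_ring_1)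
   = (\<lambda>q. - fdelta (g a) (g b) q + fdelta (g c) (g d) q + fdelta (g e) (g h) q)"
  by (simp add: fpush_add fpush_neg fpush_diff fpush_delta)

lemma push_gens:
  assumes g: "hl_hom s1 br1 al1 s2 br2 al2 g" and x: "x \<in> tens_rel s1 \<union> I_gen br1 al1"
  shows "fpush g x \<in> tens_rel s2 \<union> I_gen br2 al2"
proof -
  interpret linear s1 s2 g using g by (simp add: hl_hom_def)
  have br: "\<And>x y. g (br1 x y) = br2 (g x) (g y)" and al: "\<And>x. g (al1 x) = al2 (g x)"
    using g by (auto simp: hl_hom_def fun_eq_iff)
  from x[unfolded tens_rel_def I_gen_def] show ?thesis
  proof (elim UnE CollectE exE conjE)
    fix a a' b assume "x = (\<lambda>p. fdelta (a + a') b p - fdelta a b p - fdelta a' b p)"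
    then have "fpush g x = (\<lambda>p. fdelta (g a + g a') (g b) p - fdelta (g a) (g b) p - fdelta (g a') (g b) p)"
      by (simp only: fpush_gen3 add)
    then show ?thesis unfolding tens_rel_def I_gen_def by blast
  next
    fix a b b' assume "x = (\<lambda>p. fdelta a (b + b') p - fdelta a b p - fdelta a b' p)"
    then have "fpush g x = (\<lambda>p. fdelta (g a) (g b + g b') p - fdelta (g a) (g b) p - fdelta (g a) (g b') p)"
      by (simp only: fpush_gen3 add)
    then show ?thesis unfolding tens_rel_def I_gen_def by blast
  next
    fix c a b assume "x = (\<lambda>p. fdelta (s1 c a) b p - c * fdelta a b p)"
    then have "fpush g x = (\<lambda>p. fdelta (s2 c (g a)) (g b) p - c * fdelta (g a) (g b) p)"
      by (simp only: fpush_gen2 scale)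
    then show ?thesis unfolding tens_rel_def I_gen_def by blast
  next
    fix c a b assume "x = (\<lambda>p. fdelta a (s1 c b) p - c * fdelta a b p)"
    then have "fpush g x = (\<lambda>p. fdelta (g a) (s2 c (g b)) p - c * fdelta (g a) (g b) p)"
      by (simp only: fpush_gen2 scale)
    then show ?thesis unfolding tens_rel_def I_gen_def by blast
  next
    fix x1 x2 x3 assume "x = (\<lambda>p. - fdelta (br1 x1 x2) (al1 x3) p + fdelta (br1 x1 x3) (al1 x2) p
            + fdelta (al1 x1) (br1 x2 x3) p)"
    then have "fpush g x = (\<lambda>p. - fdelta (br2 (g x1) (g x2)) (al2 (g x3)) p + fdelta (br2 (g x1) (g x3)) (al2 (g x2)) p
            + fdelta (al2 (g x1)) (br2 (g x2) (g x3)) p)"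
      by (simp only: fpush_genI br al)
    then show ?thesis unfolding tens_rel_def I_gen_def by blast
  qed
qed

lemma push_R:
  assumes g: "hl_hom s1 br1 al1 s2 br2 al2 g" and v: "v \<in> uce_rel s1 br1 al1"
  shows "fpush g v \<in> uce_rel s2 br2 al2"
  using v unfolding uce_rel_def
proof (induction v rule: fspan_induct)
  case zero then show ?case by (simp add: fpush_zero fspan_zero)
next
  case (step c x w)
  have fx: "finite (fsupp x)" using step gens_finite by blast
  have fw: "finite (fsupp w)" using step fspan_finite gens_finite by blast
  have "fpush g (\<lambda>p. c * x p + w p) = (\<lambda>q. c * fpush g x q + fpush g w q)"
    using fx fw by (simp add: fpush_add fpush_scale)
  then show ?case using fspan_cons[OF step(3) push_gens[OF g step(1)]] by simp
qed

lemma Psum_kills_R: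
  fixes s :: "'k::field \<Rightarrow> 'x::ab_group_add \<Rightarrow> 'x" and br al and scale :: "'k \<Rightarrow> 'b::ab_group_add \<Rightarrow> 'b"
  assumes vs: "vector_space scale"
    and add1: "\<And>a a' b. \<phi> (a + a', b) = \<phi> (a, b) + \<phi> (a', b)"
    and add2: "\<And>a b b'. \<phi> (a, b + b') = \<phi> (a, b) + \<phi> (a, b')"
    and sc1: "\<And>c a b. \<phi> (s c a, b) = scale c (\<phi> (a, b))"
    and sc2: "\<And>c a b. \<phi> (a, s c b) = scale c (\<phi> (a, b))"
    and hl: "\<And>x1 x2 x3. - \<phi> (br x1 x2, al x3) + \<phi> (br x1 x3, al x2) + \<phi> (al x1, br x2 x3) = 0"
    and v: "v \<in> uce_rel s br al"
  shows "Psum scale v \<phi> = 0"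
proof -
  interpret vector_space scale by fact
  note ps = Psum_diff Psum_add Psum_neg Psum_scale Psum_delta
  have gen: "Psum scale x \<phi> = 0" if x: "x \<in> tens_rel s \<union> I_gen br al" for x
    using x unfolding tens_rel_def I_gen_def
  proof (elim UnE CollectE exE conjE)
    fix a a' b assume "x = (\<lambda>p. fdelta (a + a') b p - fdelta a b p - fdelta a' b p)"
    then show ?thesis by (simp add: ps add1)
  next
    fix a b b' assume "x = (\<lambda>p. fdelta a (b + b') p - fdelta a b p - fdelta a b' p)"
    then show ?thesis by (simp add: ps add2)
  next
    fix c a b assume "x = (\<lambda>p. fdelta (s c a) b p - c * fdelta a b p)"
    then show ?thesis by (simp add: ps sc1)
  next
    fix c a b assume "x = (\<lambda>p. fdelta a (s c b) p - c * fdelta a b p)"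
    then show ?thesis by (simp add: ps sc2)
  next
    fix x1 x2 x3 assume "x = (\<lambda>p. - fdelta (br x1 x2) (al x3) p + fdelta (br x1 x3) (al x2) p
            + fdelta (al x1) (br x2 x3) p)"
    then show ?thesis using hl[of x1 x2 x3] by (simp add: ps algebra_simps)
  qed
  from v show ?thesis unfolding uce_rel_def
  proof (induction v rule: fspan_induct)
    case zero then show ?case by (simp add: Psum_zero)
  next
    case (step c x w)
    have fx: "finite (fsupp x)" using step gens_finite by blast
    have fw: "finite (fsupp w)" using step fspan_finite gens_finite by blast
    have "Psum scale (\<lambda>p. c * x p + w p) \<phi> = scale c (Psum scale x \<phi>) + Psum scale w \<phi>"
      using Psum_add[OF fin_scale[OF fx] fw] Psum_scale[OF fx] by simp
    then show ?case using gen[OF step(1)] step(3) by simp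
  qed
qed



section \<open>Generic facts on homomorphisms and automorphisms\<close>

lemma hl_hom_linear: "hl_hom s1 br1 al1 s2 br2 al2 g \<Longrightarrow> Vector_Spaces.linear s1 s2 g"
  by (simp add: hl_hom_def)

lemma hl_hom_br: "hl_hom s1 br1 al1 s2 br2 al2 g \<Longrightarrow> g (br1 x y) = br2 (g x) (g y)"
  by (simp add: hl_hom_def)

lemma hl_hom_al: "hl_hom s1 br1 al1 s2 br2 al2 g \<Longrightarrow> g (al1 x) = al2 (g x)"
  by (simp add: hl_hom_def fun_eq_iff)

lemma hl_hom_comp:
  assumes "hl_hom s1 br1 al1 s2 br2 al2 g" "hl_hom s2 br2 al2 s3 br3 al3 h"
  shows "hl_hom s1 br1 al1 s3 br3 al3 (h \<circ> g)"
  using assms unfolding hl_hom_def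
  by (auto simp: Vector_Spaces.linear_compose fun_eq_iff)

lemma hl_hom_id:
  assumes "vector_space s"
  shows "hl_hom s br al s br al (\<lambda>x. x)"
  using assms unfolding hl_hom_def by (auto simp: linear_iff)

lemma hl_hom_inv:
  assumes g: "hl_hom s br al s br al g" and b: "bij g"
  shows "hl_hom s br al s br al (inv g)"
proof -
  have lin: "Vector_Spaces.linear s s g" using g by (simp add: hl_hom_def)
  then have vs: "vector_space s" and ad: "\<And>x y. g (x + y) = g x + g y" and sc: "\<And>c x. g (s c x) = s c (g x)"
    by (auto simp: linear_iff)
  have inj: "inj g" and su: "\<And>y. g (inv g y) = y" using b by (auto simp: bij_is_inj bij_is_surj surj_f_inv_f)
  have e: "\<And>x y. g x = g y \<Longrightarrow> x = y" using inj by (simp add: inj_eq)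
  have "inv g (x + y) = inv g x + inv g y" for x y by (rule e) (simp add: ad su)
  moreover have "inv g (s c x) = s c (inv g x)" for c x by (rule e) (simp add: sc su)
  moreover have "inv g (br x y) = br (inv g x) (inv g y)" for x y
    by (rule e) (simp add: hl_hom_br[OF g] su)
  moreover have "inv g (al x) = al (inv g x)" for x
    by (rule e) (simp add: hl_hom_al[OF g] su)
  ultimately show ?thesis using vs unfolding hl_hom_def by (auto simp: linear_iff fun_eq_iff)
qed

lemma Aut_inv: "g \<in> hl_Aut s br al \<Longrightarrow> inv g \<in> hl_Aut s br al"
  unfolding hl_Aut_def using hl_hom_inv bij_imp_bij_inv by blast

lemma Aut_comp: "g \<in> hl_Aut s br al \<Longrightarrow> h \<in> hl_Aut s br al \<Longrightarrow> g \<circ> h \<in> hl_Aut s br al"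
  unfolding hl_Aut_def using hl_hom_comp bij_comp by blast

lemma R_zero: "(\<lambda>p. 0) \<in> uce_rel s br al"
  unfolding uce_rel_def by (rule fspan_zero)

lemma R_diff: "u \<in> uce_rel s br al \<Longrightarrow> v \<in> uce_rel s br al \<Longrightarrow> (\<lambda>p. u p - v p) \<in> uce_rel s br al"
  unfolding uce_rel_def by (rule fspan_diff)

lemma R_neg: "u \<in> uce_rel s br al \<Longrightarrow> (\<lambda>p. - u p) \<in> uce_rel s br al"
  unfolding uce_rel_def by (rule fspan_neg)

lemma FSall_iff: "u \<in> FSall \<longleftrightarrow> finite (fsupp u)"
  by (simp add: FSall_def)

lemma ucls_self: "u \<in> FSall \<Longrightarrow> u \<in> ucls s br al u"
  unfolding ucls_def using R_zero by simp

lemma ucls_eq_iff: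
  assumes "u \<in> FSall" "v \<in> FSall"
  shows "ucls s br al u = ucls s br al v \<longleftrightarrow> (\<lambda>p. u p - v p) \<in> uce_rel s br al"
proof
  assume "ucls s br al u = ucls s br al v"
  then have "u \<in> ucls s br al v" using ucls_self[OF assms(1), of s br al] by simp
  then have "(\<lambda>p. v p - u p) \<in> uce_rel s br al" by (simp add: ucls_def)
  from R_neg[OF this] show "(\<lambda>p. u p - v p) \<in> uce_rel s br al" by simp
next
  assume d: "(\<lambda>p. u p - v p) \<in> uce_rel s br al"
  have "(\<lambda>p. u p - w p) \<in> uce_rel s br al \<longleftrightarrow> (\<lambda>p. v p - w p) \<in> uce_rel s br al" for w
  proof
    assume "(\<lambda>p. u p - w p) \<in> uce_rel s br al"
    from R_diff[OF this d] show "(\<lambda>p. v p - w p) \<in> uce_rel s br al" by simp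
  next
    assume a: "(\<lambda>p. v p - w p) \<in> uce_rel s br al"
    from R_diff[OF a R_neg[OF d]] show "(\<lambda>p. u p - w p) \<in> uce_rel s br al" by simp
  qed
  then show "ucls s br al u = ucls s br al v" unfolding ucls_def by auto
qed

lemma rep_ucls:
  fixes s br al and u :: "'a::ab_group_add \<times> 'a \<Rightarrow> 'k::field"
  assumes FA: "FreeA al = (FSall :: ('a \<times> 'a \<Rightarrow> 'k) set)" and u: "u \<in> FSall"
  defines "r \<equiv> SOME v. v \<in> ucls s br al u \<inter> FreeA al"
  shows "r \<in> FSall" "(\<lambda>p. u p - r p) \<in> uce_rel s br al"
proof -
  have "u \<in> ucls s br al u \<inter> FreeA al" using ucls_self[OF u, of s br al] u FA by simp
  then have "r \<in> ucls s br al u \<inter> FreeA al" unfolding r_def by (rule someI[of "\<lambda>v. v \<in> ucls s br al u \<inter> FreeA al"])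
  then show "r \<in> FSall" "(\<lambda>p. u p - r p) \<in> uce_rel s br al" by (auto simp: ucls_def)
qed

lemma uce_map_ucls:
  fixes u :: "'b::ab_group_add \<times> 'b \<Rightarrow> 'k::field"
  assumes g: "hl_hom s1 br1 al1 s2 br2 al2 g" and FA: "FreeA al1 = (FSall :: ('b \<times> 'b \<Rightarrow> 'k) set)" and u: "u \<in> FSall"
  shows "uce_map al1 s2 br2 al2 g (ucls s1 br1 al1 u) = ucls s2 br2 al2 (fpush g u)"
proof -
  define r where "r \<equiv> SOME v. v \<in> ucls s1 br1 al1 u \<inter> FreeA al1"
  have r: "r \<in> FSall" "(\<lambda>p. u p - r p) \<in> uce_rel s1 br1 al1"
    using rep_ucls[OF FA u] unfolding r_def by auto
  have fu: "finite (fsupp u)" and fr: "finite (fsupp r)" using u r by (auto simp: FSall_iff)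
  have "fpush g (\<lambda>p. u p - r p) \<in> uce_rel s2 br2 al2" by (rule push_R[OF g r(2)])
  then have d: "(\<lambda>q. fpush g u q - fpush g r q) \<in> uce_rel s2 br2 al2" by (simp add: fpush_diff[OF fu fr])
  have "ucls s2 br2 al2 (fpush g r) = ucls s2 br2 al2 (fpush g u)"
    using ucls_eq_iff[of "fpush g r" "fpush g u" s2 br2 al2] R_neg[OF d] fu fr
    by (simp add: FSall_iff finite_fpush)
  then show ?thesis unfolding uce_map_def r_def by simp
qed



locale cov =
  fixes s' :: "'k::field \<Rightarrow> 'b::ab_group_add \<Rightarrow> 'b" and br' :: "'b \<Rightarrow> 'b \<Rightarrow> 'b" and al' :: "'b \<Rightarrow> 'b"
    and s :: "'k \<Rightarrow> 'a::ab_group_add \<Rightarrow> 'a" and br :: "'a \<Rightarrow> 'a \<Rightarrow> 'a" and al :: "'a \<Rightarrow> 'a"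
    and f :: "'b \<Rightarrow> 'a"
  assumes L': "hom_leibniz s' br' al'"
    and L: "hom_leibniz s br al"
    and cover: "alpha_cover s' br' al' s br al f"
begin

lemma vs': "vector_space s'" using L' by (simp add: hom_leibniz_def)
lemma vs: "vector_space s" using L by (simp add: hom_leibniz_def)

interpretation V': vector_space s' by (rule vs')
interpretation V: vector_space s by (rule vs)

lemma f_hom: "hl_hom s' br' al' s br al f" using cover by (simp add: alpha_cover_def central_extension_def)
lemma f_surj: "surj f" using cover by (simp add: alpha_cover_def central_extension_def)
lemma f_cent: "f z = 0 \<Longrightarrow> br' z y = 0 \<and> br' y z = 0"
  using cover by (auto simp: alpha_cover_def central_extension_def hl_ker_def hl_center_def)
lemma perf': "alpha_perfect s' br' al'" using cover by (simp add: alpha_cover_def)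

lemma f_lin: "Vector_Spaces.linear s' s f" using f_hom by (rule hl_hom_linear)
interpretation F: linear s' s f by (rule f_lin)

lemma f_br: "f (br' x y) = br (f x) (f y)" using f_hom by (rule hl_hom_br)
lemma f_al: "f (al' x) = al (f x)" using f_hom by (rule hl_hom_al)

lemma brl'_lin: "Vector_Spaces.linear s' s' (\<lambda>x. br' x y)" using L' by (simp add: hom_leibniz_def)
lemma brr'_lin: "Vector_Spaces.linear s' s' (br' x)" using L' by (simp add: hom_leibniz_def)
lemma al'_lin: "Vector_Spaces.linear s' s' al'" using L' by (simp add: hom_leibniz_def)
lemma al_lin: "Vector_Spaces.linear s s al" using L by (simp add: hom_leibniz_def)

lemma br'_addL: "br' (x + x') y = br' x y + br' x' y" using brl'_lin by (simp add: linear_iff)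
lemma br'_addR: "br' x (y + y') = br' x y + br' x y'" using brr'_lin by (simp add: linear_iff)
lemma br'_scL: "br' (s' c x) y = s' c (br' x y)" using brl'_lin by (simp add: linear_iff)
lemma br'_scR: "br' x (s' c y) = s' c (br' x y)" using brr'_lin by (simp add: linear_iff)
lemma al'_add: "al' (x + y) = al' x + al' y" using al'_lin by (simp add: linear_iff)
lemma al'_sc: "al' (s' c x) = s' c (al' x)" using al'_lin by (simp add: linear_iff)
lemma al_add: "al (x + y) = al x + al y" using al_lin by (simp add: linear_iff)
lemma al_sc: "al (s c x) = s c (al x)" using al_lin by (simp add: linear_iff)
lemma hl': "br' (al' x) (br' y z) = br' (br' x y) (al' z) - br' (br' x z) (al' y)"
  using L' by (simp add: hom_leibniz_def)
lemma mult': "al' (br' x y) = br' (al' x) (al' y)" using L' by (simp add: hom_leibniz_def)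

lemma cent:
  assumes "f a = f a'" "f b = f b'"
  shows "br' a b = br' a' b'"
proof -
  have z1: "f (a' - a) = 0" and z2: "f (b' - b) = 0" using assms by (simp_all add: F.diff)
  have "br' a' b' = br' (a + (a' - a)) (b + (b' - b))" by simp
  also have "\<dots> = br' a b + br' a (b' - b) + (br' (a' - a) b + br' (a' - a) (b' - b))"
    by (simp only: br'_addL br'_addR add_ac)
  also have "\<dots> = br' a b" using f_cent[OF z1] f_cent[OF z2] by simp
  finally show ?thesis by simp
qed

definition \<iota> :: "'a \<Rightarrow> 'b" where "\<iota> = inv f"
lemma f_\<iota>[simp]: "f (\<iota> y) = y" unfolding \<iota>_def using f_surj by (simp add: surj_f_inv_f)

definition B :: "'a \<times> 'a \<Rightarrow> 'b" where "B q = br' (\<iota> (fst q)) (\<iota> (snd q))"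
definition Ut :: "('a \<times> 'a \<Rightarrow> 'k) \<Rightarrow> 'b" where "Ut u = Psum s' u B"
definition U' :: "('b \<times> 'b \<Rightarrow> 'k) \<Rightarrow> 'b" where "U' w = Psum s' w (\<lambda>p. br' (fst p) (snd p))"
definition UL :: "('a \<times> 'a \<Rightarrow> 'k) \<Rightarrow> 'a" where "UL u = Psum s u (\<lambda>p. br (fst p) (snd p))"

lemma B_f: "B (f a, f b) = br' a b" unfolding B_def by (rule cent) simp_all

lemma K1: "finite (fsupp w) \<Longrightarrow> Ut (fpush f w) = U' w"
  unfolding Ut_def U'_def by (simp add: V'.Psum_push B_f)

lemma Ut_kills: "u \<in> uce_rel s br al \<Longrightarrow> Ut u = 0"
  unfolding Ut_def
proof (rule Psum_kills_R[OF vs'])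
  fix a a' b show "B (a + a', b) = B (a, b) + B (a', b)"
    unfolding B_def by (simp add: cent[of "\<iota> (a + a')" "\<iota> a + \<iota> a'" "\<iota> b" "\<iota> b"] F.add br'_addL)
next
  fix a b b' show "B (a, b + b') = B (a, b) + B (a, b')"
    unfolding B_def by (simp add: cent[of "\<iota> a" "\<iota> a" "\<iota> (b + b')" "\<iota> b + \<iota> b'"] F.add br'_addR)
next
  fix c a b show "B (s c a, b) = s' c (B (a, b))"
    unfolding B_def by (simp add: cent[of "\<iota> (s c a)" "s' c (\<iota> a)" "\<iota> b" "\<iota> b"] F.scale br'_scL)
next
  fix c a b show "B (a, s c b) = s' c (B (a, b))"
    unfolding B_def by (simp add: cent[of "\<iota> a" "\<iota> a" "\<iota> (s c b)" "s' c (\<iota> b)"] F.scale br'_scR)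
next
  fix x1 x2 x3
  have e: "\<And>x y. \<iota> (br x y) = \<iota> (br x y)" by simp
  have b1: "B (br x y, al z) = br' (br' (\<iota> x) (\<iota> y)) (al' (\<iota> z))" for x y z
    unfolding B_def by (rule cent) (simp_all add: f_br f_al)
  have b2: "B (al x, br y z) = br' (al' (\<iota> x)) (br' (\<iota> y) (\<iota> z))" for x y z
    unfolding B_def by (rule cent) (simp_all add: f_br f_al)
  show "- B (br x1 x2, al x3) + B (br x1 x3, al x2) + B (al x1, br x2 x3) = 0"
    by (simp add: b1 b2 hl')
next
  assume "u \<in> uce_rel s br al" then show "u \<in> uce_rel s br al" .
qed

lemma U'_kills: "w \<in> uce_rel s' br' al' \<Longrightarrow> U' w = 0"
  using K1[OF R_finite] Ut_kills[OF push_R[OF f_hom]] by metis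

lemma fUt: "f (Ut u) = UL u"
  unfolding Ut_def UL_def by (simp add: linear_Psum[OF f_lin] B_def f_br)

lemma Ut_add: "finite (fsupp u) \<Longrightarrow> finite (fsupp v) \<Longrightarrow> Ut (\<lambda>p. u p + v p) = Ut u + Ut v"
  unfolding Ut_def by (rule V'.Psum_add)
lemma Ut_diff: "finite (fsupp u) \<Longrightarrow> finite (fsupp v) \<Longrightarrow> Ut (\<lambda>p. u p - v p) = Ut u - Ut v"
  unfolding Ut_def by (rule V'.Psum_diff)
lemma Ut_scale: "finite (fsupp u) \<Longrightarrow> Ut (\<lambda>p. c * u p) = s' c (Ut u)"
  unfolding Ut_def by (rule V'.Psum_scale)
lemma Ut_zero: "Ut (\<lambda>p. 0) = 0"
  unfolding Ut_def by (rule V'.Psum_zero)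
lemma Ut_delta: "Ut (fdelta a b) = br' (\<iota> a) (\<iota> b)"
  unfolding Ut_def by (simp add: V'.Psum_delta B_def)
lemma U'_diff: "finite (fsupp u) \<Longrightarrow> finite (fsupp v) \<Longrightarrow> U' (\<lambda>p. u p - v p) = U' u - U' v"
  unfolding U'_def by (rule V'.Psum_diff)

lemma Ut_surj: "\<exists>u. finite (fsupp u) \<and> Ut u = x"
proof -
  let ?T = "{x. \<exists>u. finite (fsupp u) \<and> Ut u = x}"
  have sub: "V'.subspace ?T"
  proof (rule V'.subspaceI)
    show "0 \<in> ?T" using Ut_zero by (auto intro!: exI[of _ "\<lambda>p. 0"] simp: fsupp_def)
  next
    fix x y assume "x \<in> ?T" "y \<in> ?T"
    then obtain u v where "finite (fsupp u)" "Ut u = x" "finite (fsupp v)" "Ut v = y" by auto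
    then show "x + y \<in> ?T" using Ut_add by (auto intro!: exI[of _ "\<lambda>p. u p + v p"])
  next
    fix c x assume "x \<in> ?T"
    then obtain u where "finite (fsupp u)" "Ut u = x" by auto
    then show "s' c x \<in> ?T" using Ut_scale by (auto intro!: exI[of _ "\<lambda>p. c * u p"])
  qed
  have gen: "{br' (al' x) (al' y) | x y. True} \<subseteq> ?T"
  proof clarify
    fix x y
    have "Ut (fdelta (f (al' x)) (f (al' y))) = br' (al' x) (al' y)"
      unfolding Ut_delta by (rule cent) simp_all
    then show "\<exists>u. finite (fsupp u) \<and> Ut u = br' (al' x) (al' y)" by (intro exI[of _ "fdelta (f (al' x)) (f (al' y))"]) simp
  qed
  have "V'.span {br' (al' x) (al' y) | x y. True} = UNIV" using perf' by (simp add: alpha_perfect_def)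
  then show ?thesis using V'.span_minimal[OF gen sub] by auto
qed


interpretation AL': linear s' s' al' by (rule al'_lin)

lemma range_al': "range al' = UNIV"
proof -
  have sub: "V'.subspace (range al')"
  proof (rule V'.subspaceI)
    show "0 \<in> range al'" using AL'.zero by (metis rangeI)
    show "x + y \<in> range al'" if "x \<in> range al'" "y \<in> range al'" for x y
      using that by clarify (metis AL'.add rangeI)
    show "s' c x \<in> range al'" if "x \<in> range al'" for c x
      using that by clarify (metis AL'.scale rangeI)
  qed
  have gen: "{br' (al' x) (al' y) | x y. True} \<subseteq> range al'"
  proof clarify
    fix x y show "br' (al' x) (al' y) \<in> range al'" by (metis mult' rangeI)
  qed
  have "V'.span {br' (al' x) (al' y) | x y. True} = UNIV" using perf' by (simp add: alpha_perfect_def)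
  then show ?thesis using V'.span_minimal[OF gen sub] by auto
qed

lemma range_al: "range al = UNIV"
proof -
  have "y \<in> range al" for y
  proof -
    obtain x where "al' x = \<iota> y" using range_al' by (metis UNIV_I image_iff)
    then have "f (al' x) = y" by simp
    then have "al (f x) = y" by (simp add: f_al)
    then show ?thesis by (metis rangeI)
  qed
  then show ?thesis by auto
qed

lemma FA': "FreeA al' = (FSall :: ('b \<times> 'b \<Rightarrow> 'k) set)"
  using range_al' by (auto simp: FreeA_def)
lemma FA: "FreeA al = (FSall :: ('a \<times> 'a \<Rightarrow> 'k) set)"
  using range_al by (auto simp: FreeA_def)

definition C0 :: "('a \<times> 'a \<Rightarrow> 'k) set set" where
  "C0 = {ucls s br al u | u. u \<in> FSall \<and> Ut u = 0}"

lemma Ut_cls: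
  assumes "u \<in> FSall" "v \<in> FSall" "ucls s br al u = ucls s br al v"
  shows "Ut u = Ut v"
proof -
  have "(\<lambda>p. u p - v p) \<in> uce_rel s br al" using ucls_eq_iff assms by blast
  then have "Ut (\<lambda>p. u p - v p) = 0" by (rule Ut_kills)
  then show ?thesis using Ut_diff assms(1,2) by (simp add: FSall_iff)
qed

lemma C0_mem: "v \<in> FSall \<Longrightarrow> ucls s br al v \<in> C0 \<longleftrightarrow> Ut v = 0"
proof
  assume v: "v \<in> FSall" and "ucls s br al v \<in> C0"
  then obtain u where "u \<in> FSall" "Ut u = 0" "ucls s br al v = ucls s br al u" unfolding C0_def by auto
  then show "Ut v = 0" using Ut_cls[OF v] by metis
next
  assume "v \<in> FSall" "Ut v = 0" then show "ucls s br al v \<in> C0" unfolding C0_def by auto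
qed

lemma uce_U'_eq: "uce_U s' br' al' X = U' (SOME v. v \<in> X \<inter> FreeA al')"
  unfolding uce_U_def U'_def Psum_def Let_def by simp

lemma C_eq: "uce_map al' s br al f ` uce_ker s' br' al' = C0"
proof
  show "uce_map al' s br al f ` uce_ker s' br' al' \<subseteq> C0"
  proof clarify
    fix X assume X: "X \<in> uce_ker s' br' al'"
    then obtain w where w: "w \<in> FSall" and Xw: "X = ucls s' br' al' w"
      unfolding uce_ker_def uce_set_def FA' by auto
    define r where "r \<equiv> SOME v. v \<in> ucls s' br' al' w \<inter> FreeA al'"
    have r: "r \<in> FSall" "(\<lambda>p. w p - r p) \<in> uce_rel s' br' al'"
      using rep_ucls[OF FA' w] unfolding r_def by auto
    have "U' r = 0" using X unfolding uce_ker_def uce_U'_eq Xw r_def by simp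
    moreover have "U' (\<lambda>p. w p - r p) = 0" by (rule U'_kills[OF r(2)])
    ultimately have "U' w = 0" using U'_diff w r(1) by (simp add: FSall_iff)
    then have "Ut (fpush f w) = 0" using K1 w by (simp add: FSall_iff)
    moreover have "uce_map al' s br al f X = ucls s br al (fpush f w)"
      unfolding Xw by (rule uce_map_ucls[OF f_hom FA' w])
    moreover have "fpush f w \<in> FSall" using w by (simp add: FSall_iff finite_fpush)
    ultimately show "uce_map al' s br al f X \<in> C0" using C0_mem by simp
  qed
next
  show "C0 \<subseteq> uce_map al' s br al f ` uce_ker s' br' al'"
  proof
    fix X assume "X \<in> C0"
    then obtain u where u: "u \<in> FSall" "Ut u = 0" and Xu: "X = ucls s br al u" unfolding C0_def by auto
    define w where "w = fpush \<iota> u"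
    have w: "w \<in> FSall" using u unfolding w_def by (simp add: FSall_iff finite_fpush)
    have fw: "fpush f w = u"
    proof -
      have "f \<circ> \<iota> = (\<lambda>x. x)" by (simp add: fun_eq_iff)
      then show ?thesis unfolding w_def using fpush_comp[of u f \<iota>] fpush_id[of u] u by (simp add: FSall_iff)
    qed
    define Y where "Y = ucls s' br' al' w"
    define r where "r \<equiv> SOME v. v \<in> ucls s' br' al' w \<inter> FreeA al'"
    have r: "r \<in> FSall" "(\<lambda>p. w p - r p) \<in> uce_rel s' br' al'"
      using rep_ucls[OF FA' w] unfolding r_def by auto
    have "U' w = 0" using K1[of w] w fw u by (simp add: FSall_iff)
    moreover have "U' (\<lambda>p. w p - r p) = 0" by (rule U'_kills[OF r(2)])
    ultimately have "U' r = 0" using U'_diff w r(1) by (simp add: FSall_iff)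
    then have "Y \<in> uce_ker s' br' al'"
      unfolding uce_ker_def uce_U'_eq Y_def r_def uce_set_def FA' using w by simp
    moreover have "uce_map al' s br al f Y = X"
      unfolding Y_def Xu using uce_map_ucls[OF f_hom FA' w] fw by simp
    ultimately show "X \<in> uce_map al' s br al f ` uce_ker s' br' al'" by blast
  qed
qed


lemma lin_zero: "Vector_Spaces.linear s1 s2 g \<Longrightarrow> g 0 = 0"
proof -
  assume "Vector_Spaces.linear s1 s2 g"
  then interpret linear s1 s2 g .
  show ?thesis by simp
qed

definition lifts :: "('a \<Rightarrow> 'a) \<Rightarrow> ('b \<Rightarrow> 'b) \<Rightarrow> bool" where
  "lifts h \<theta> \<longleftrightarrow> hl_hom s' br' al' s' br' al' \<theta> \<and> f \<circ> \<theta> = h \<circ> f"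

lemma uniq:
  assumes t1: "hl_hom s' br' al' s' br' al' \<theta>1" and t2: "hl_hom s' br' al' s' br' al' \<theta>2"
    and e: "f \<circ> \<theta>1 = f \<circ> \<theta>2"
  shows "\<theta>1 = \<theta>2"
proof
  fix x
  obtain u where u: "finite (fsupp u)" "Ut u = x" using Ut_surj by blast
  have ef: "f (\<theta>1 y) = f (\<theta>2 y)" for y using e by (simp add: fun_eq_iff)
  have "\<theta>1 (B q) = \<theta>2 (B q)" for q
    unfolding B_def hl_hom_br[OF t1] hl_hom_br[OF t2] by (rule cent) (simp_all add: ef)
  then show "\<theta>1 x = \<theta>2 x"
    unfolding u(2)[symmetric] Ut_def linear_Psum[OF hl_hom_linear[OF t1]] linear_Psum[OF hl_hom_linear[OF t2]]
    by simp
qed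

lemma lift_Ut:
  assumes t: "hl_hom s' br' al' s' br' al' \<theta>" and e: "f \<circ> \<theta> = h \<circ> f" and u: "finite (fsupp u)"
  shows "Ut (fpush h u) = \<theta> (Ut u)"
proof -
  have ef: "f (\<theta> y) = h (f y)" for y using e by (simp add: fun_eq_iff)
  have "B (pmap h q) = \<theta> (B q)" for q
    unfolding B_def hl_hom_br[OF t] by (rule cent) (simp_all add: ef)
  then show ?thesis
    unfolding Ut_def V'.Psum_push[OF u] linear_Psum[OF hl_hom_linear[OF t]] by simp
qed

lemma al'_Ut: "finite (fsupp u) \<Longrightarrow> al' (Ut u) = Ut (fpush al u)"
proof -
  assume u: "finite (fsupp u)"
  have "al' (B q) = B (pmap al q)" for q
    unfolding B_def mult' by (rule cent) (simp_all add: f_al)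
  then show ?thesis
    unfolding Ut_def V'.Psum_push[OF u] linear_Psum[OF al'_lin] by simp
qed

lemma pres_of_lift:
  assumes h: "hl_hom s br al s br al h" and l: "lifts h \<theta>"
  shows "uce_map al s br al h ` C0 \<subseteq> C0"
proof
  fix Y assume "Y \<in> uce_map al s br al h ` C0"
  then obtain u where u: "u \<in> FSall" "Ut u = 0" and Y: "Y = uce_map al s br al h (ucls s br al u)"
    unfolding C0_def by auto
  have "Y = ucls s br al (fpush h u)" unfolding Y by (rule uce_map_ucls[OF h FA u(1)])
  moreover have "Ut (fpush h u) = 0"
  proof -
    have ht: "hl_hom s' br' al' s' br' al' \<theta>" "f \<circ> \<theta> = h \<circ> f" using l by (auto simp: lifts_def)
    show ?thesis using lift_Ut[OF ht] u lin_zero[OF hl_hom_linear[OF ht(1)]] by (simp add: FSall_iff)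
  qed
  moreover have "fpush h u \<in> FSall" using u by (simp add: FSall_iff finite_fpush)
  ultimately show "Y \<in> C0" using C0_mem by simp
qed

lemma cond_of_pres:
  assumes h: "hl_hom s br al s br al h" and p: "uce_map al s br al h ` C0 \<subseteq> C0"
    and u: "finite (fsupp u)" "Ut u = 0"
  shows "Ut (fpush h u) = 0"
proof -
  have uF: "u \<in> FSall" using u by (simp add: FSall_iff)
  have "ucls s br al u \<in> C0" using C0_mem[OF uF] u by simp
  then have "uce_map al s br al h (ucls s br al u) \<in> C0" using p by blast
  then have "ucls s br al (fpush h u) \<in> C0" using uce_map_ucls[OF h FA uF] by simp
  then show ?thesis using C0_mem u by (simp add: FSall_iff finite_fpush)
qed

lemma exist:
  assumes h: "hl_hom s br al s br al h"
    and cond: "\<And>u. finite (fsupp u) \<Longrightarrow> Ut u = 0 \<Longrightarrow> Ut (fpush h u) = 0"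
  shows "\<exists>\<theta>. lifts h \<theta>"
proof -
  define \<theta> where "\<theta> x = Ut (fpush h (SOME u. finite (fsupp u) \<and> Ut u = x))" for x
  have wd: "Ut (fpush h u) = Ut (fpush h v)" if "finite (fsupp u)" "finite (fsupp v)" "Ut u = Ut v" for u v
  proof -
    have "Ut (\<lambda>p. u p - v p) = 0" using Ut_diff that by simp
    then have "Ut (fpush h (\<lambda>p. u p - v p)) = 0" using cond that by simp
    then show ?thesis using that by (simp add: fpush_diff Ut_diff finite_fpush)
  qed
  have tU: "\<theta> (Ut u) = Ut (fpush h u)" if u: "finite (fsupp u)" for u
  proof -
    have "finite (fsupp (SOME v. finite (fsupp v) \<and> Ut v = Ut u)) \<and> Ut (SOME v. finite (fsupp v) \<and> Ut v = Ut u) = Ut u"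
      by (rule someI[of "\<lambda>v. finite (fsupp v) \<and> Ut v = Ut u" u]) (simp add: u)
    then show ?thesis unfolding \<theta>_def using wd u by blast
  qed
  have hlin: "Vector_Spaces.linear s s h" using h by (rule hl_hom_linear)
  have fU: "f (\<theta> x) = h (f x)" for x
  proof -
    obtain u where u: "finite (fsupp u)" "Ut u = x" using Ut_surj by blast
    have "f (\<theta> x) = UL (fpush h u)" unfolding u(2)[symmetric] tU[OF u(1)] fUt ..
    also have "\<dots> = Psum s u (\<lambda>p. h (br (fst p) (snd p)))"
      unfolding UL_def V.Psum_push[OF u(1)] by (simp add: hl_hom_br[OF h])
    also have "\<dots> = h (f x)" unfolding u(2)[symmetric] fUt UL_def linear_Psum[OF hlin] ..
    finally show ?thesis .
  qed
  have lin: "Vector_Spaces.linear s' s' \<theta>"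
    unfolding linear_iff
  proof (intro conjI allI)
    show "vector_space s'" by (rule vs')
    show "vector_space s'" by (rule vs')
    fix x y
    obtain u where u: "finite (fsupp u)" "Ut u = x" using Ut_surj by blast
    obtain v where v: "finite (fsupp v)" "Ut v = y" using Ut_surj by blast
    have "x + y = Ut (\<lambda>p. u p + v p)" using Ut_add u v by simp
    then have "\<theta> (x + y) = Ut (fpush h (\<lambda>p. u p + v p))" using tU u v by simp
    also have "\<dots> = Ut (\<lambda>q. fpush h u q + fpush h v q)" using u v by (simp add: fpush_add)
    also have "\<dots> = Ut (fpush h u) + Ut (fpush h v)" using u v by (simp add: Ut_add finite_fpush)
    also have "\<dots> = \<theta> x + \<theta> y" using tU[OF u(1)] tU[OF v(1)] u(2) v(2) by simp
    finally show "\<theta> (x + y) = \<theta> x + \<theta> y" .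
  next
    fix c x
    obtain u where u: "finite (fsupp u)" "Ut u = x" using Ut_surj by blast
    have "s' c x = Ut (\<lambda>p. c * u p)" using Ut_scale u by simp
    then have "\<theta> (s' c x) = Ut (fpush h (\<lambda>p. c * u p))" using tU u by simp
    also have "\<dots> = Ut (\<lambda>q. c * fpush h u q)" using u by (simp add: fpush_scale)
    also have "\<dots> = s' c (Ut (fpush h u))" using u by (simp add: Ut_scale finite_fpush)
    also have "\<dots> = s' c (\<theta> x)" using tU[OF u(1)] u(2) by simp
    finally show "\<theta> (s' c x) = s' c (\<theta> x)" .
  qed
  have brt: "\<theta> (br' x y) = br' (\<theta> x) (\<theta> y)" for x y
  proof -
    have "br' x y = Ut (fdelta (f x) (f y))" unfolding Ut_delta by (rule cent) simp_all
    then have "\<theta> (br' x y) = Ut (fdelta (h (f x)) (h (f y)))"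
      using tU[of "fdelta (f x) (f y)"] by (simp add: fpush_delta)
    also have "\<dots> = br' (\<theta> x) (\<theta> y)" unfolding Ut_delta by (rule cent) (simp_all add: fU)
    finally show ?thesis .
  qed
  have hal: "h (al z) = al (h z)" for z using h by (rule hl_hom_al)
  have alt: "\<theta> (al' x) = al' (\<theta> x)" for x
  proof -
    obtain u where u: "finite (fsupp u)" "Ut u = x" using Ut_surj by blast
    have "\<theta> (al' x) = Ut (fpush (h \<circ> al) u)"
      unfolding u(2)[symmetric] al'_Ut[OF u(1)] tU[OF finite_fpush[OF u(1)]] fpush_comp[OF u(1)] ..
    also have "h \<circ> al = al \<circ> h" using hal by (simp add: fun_eq_iff)
    also have "Ut (fpush (al \<circ> h) u) = al' (\<theta> x)"
      unfolding u(2)[symmetric] tU[OF u(1)] al'_Ut[OF finite_fpush[OF u(1)]] fpush_comp[OF u(1)] ..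
    finally show ?thesis .
  qed
  have "lifts h \<theta>"
    unfolding lifts_def hl_hom_def using lin brt alt fU by (simp add: fun_eq_iff)
  then show ?thesis by blast
qed


lemma h_hom: "h \<in> hl_Aut s br al \<Longrightarrow> hl_hom s br al s br al h" by (simp add: hl_Aut_def)
lemma h_bij: "h \<in> hl_Aut s br al \<Longrightarrow> bij h" by (simp add: hl_Aut_def)

lemma inv_comp_id: "bij h \<Longrightarrow> inv h \<circ> h = (\<lambda>x. x)"
  by (simp add: fun_eq_iff bij_is_inj)
lemma comp_inv_id: "bij h \<Longrightarrow> h \<circ> inv h = (\<lambda>x. x)"
  by (simp add: fun_eq_iff bij_is_surj surj_f_inv_f)

lemma map_back:
  assumes h: "h \<in> hl_Aut s br al" and g: "g \<in> hl_Aut s br al" and gh: "g \<circ> h = (\<lambda>x. x)"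
    and u: "u \<in> FSall"
  shows "uce_map al s br al g (uce_map al s br al h (ucls s br al u)) = ucls s br al u"
proof -
  have uf: "finite (fsupp u)" using u by (simp add: FSall_iff)
  have "fpush h u \<in> FSall" using uf by (simp add: FSall_iff finite_fpush)
  then have "uce_map al s br al g (uce_map al s br al h (ucls s br al u)) = ucls s br al (fpush g (fpush h u))"
    using uce_map_ucls[OF h_hom[OF h] FA u] uce_map_ucls[OF h_hom[OF g] FA] by simp
  also have "fpush g (fpush h u) = fpush (g \<circ> h) u" by (rule fpush_comp[OF uf])
  also have "\<dots> = u" unfolding gh by (rule fpush_id[OF uf])
  finally show ?thesis .
qed

lemma inv_pres:
  assumes h: "h \<in> hl_Aut s br al" and e: "uce_map al s br al h ` C0 = C0"
  shows "uce_map al s br al (inv h) ` C0 \<subseteq> C0"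
proof
  fix Z assume "Z \<in> uce_map al s br al (inv h) ` C0"
  then obtain X where X: "X \<in> C0" and Z: "Z = uce_map al s br al (inv h) X" by blast
  have "X \<in> uce_map al s br al h ` C0" using X e by simp
  then obtain Y where Y: "Y \<in> C0" and XY: "X = uce_map al s br al h Y" by (rule imageE) simp
  then obtain u where u: "u \<in> FSall" "Ut u = 0" and Yu: "Y = ucls s br al u" unfolding C0_def by auto
  have "Z = Y" unfolding Z XY Yu
    by (rule map_back[OF h Aut_inv[OF h] inv_comp_id[OF h_bij[OF h]] u(1)])
  then show "Z \<in> C0" using Y by simp
qed

lemma eq_of_subs:
  assumes h: "h \<in> hl_Aut s br al" and p1: "uce_map al s br al h ` C0 \<subseteq> C0"
    and p2: "uce_map al s br al (inv h) ` C0 \<subseteq> C0"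
  shows "uce_map al s br al h ` C0 = C0"
proof (rule equalityI[OF p1], rule subsetI)
  fix X assume X: "X \<in> C0"
  then obtain u where u: "u \<in> FSall" "Ut u = 0" and Xu: "X = ucls s br al u" unfolding C0_def by auto
  define Y where "Y = uce_map al s br al (inv h) X"
  have b: "Y \<in> C0" using p2 X unfolding Y_def by (rule subsetD[OF _ imageI])
  have a: "uce_map al s br al h Y = X" unfolding Y_def Xu
    by (rule map_back[OF Aut_inv[OF h] h comp_inv_id[OF h_bij[OF h]] u(1)])
  show "X \<in> uce_map al s br al h ` C0" using imageI[OF b, of "uce_map al s br al h"] a by simp
qed

lemma lifts_inv:
  assumes t: "\<theta> \<in> hl_Aut s' br' al'" and h: "h \<in> hl_Aut s br al" and e: "f \<circ> \<theta> = h \<circ> f"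
  shows "lifts (inv h) (inv \<theta>)"
proof -
  have bt: "bij \<theta>" and bh: "bij h" using t h by (auto simp: hl_Aut_def)
  have "f (inv \<theta> x) = inv h (f x)" for x
  proof -
    have "h (f (inv \<theta> x)) = f (\<theta> (inv \<theta> x))" using e by (simp add: fun_eq_iff)
    also have "\<dots> = f x" using bt by (simp add: bij_is_surj surj_f_inv_f)
    finally show ?thesis using bij_inv_eq_iff[OF bh, of "f (inv \<theta> x)" "f x"] by simp
  qed
  then show ?thesis using Aut_inv[OF t] by (auto simp: lifts_def hl_Aut_def fun_eq_iff)
qed

lemma main_iff:
  assumes h: "h \<in> hl_Aut s br al"
  shows "(\<exists>\<theta>\<in>hl_Aut s' br' al'. f \<circ> \<theta> = h \<circ> f) \<longleftrightarrow> uce_map al s br al h ` C0 = C0"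
proof
  assume "\<exists>\<theta>\<in>hl_Aut s' br' al'. f \<circ> \<theta> = h \<circ> f"
  then obtain \<theta> where t: "\<theta> \<in> hl_Aut s' br' al'" and e: "f \<circ> \<theta> = h \<circ> f" by blast
  have l1: "lifts h \<theta>" using t e by (simp add: lifts_def hl_Aut_def)
  have l2: "lifts (inv h) (inv \<theta>)" by (rule lifts_inv[OF t h e])
  show "uce_map al s br al h ` C0 = C0"
    by (rule eq_of_subs[OF h pres_of_lift[OF h_hom[OF h] l1] pres_of_lift[OF h_hom[OF Aut_inv[OF h]] l2]])
next
  assume e: "uce_map al s br al h ` C0 = C0"
  have hh: "hl_hom s br al s br al h" by (rule h_hom[OF h])
  have hi: "hl_hom s br al s br al (inv h)" by (rule h_hom[OF Aut_inv[OF h]])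
  obtain \<theta>1 where l1: "lifts h \<theta>1"
    using exist[OF hh cond_of_pres[OF hh]] e by blast
  obtain \<theta>2 where l2: "lifts (inv h) \<theta>2"
    using exist[OF hi cond_of_pres[OF hi inv_pres[OF h e]]] by blast
  have t1: "hl_hom s' br' al' s' br' al' \<theta>1" and e1: "f \<circ> \<theta>1 = h \<circ> f"
    and t2: "hl_hom s' br' al' s' br' al' \<theta>2" and e2: "f \<circ> \<theta>2 = inv h \<circ> f"
    using l1 l2 by (auto simp: lifts_def)
  have idh: "hl_hom s' br' al' s' br' al' (\<lambda>x. x)" by (rule hl_hom_id[OF vs'])
  have bh: "bij h" by (rule h_bij[OF h])
  have c12: "\<theta>1 \<circ> \<theta>2 = (\<lambda>x. x)"
  proof (rule uniq[OF hl_hom_comp[OF t2 t1] idh])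
    have "f \<circ> (\<theta>1 \<circ> \<theta>2) = h \<circ> (inv h \<circ> f)" using e1 e2 by (simp add: fun_eq_iff)
    then show "f \<circ> (\<theta>1 \<circ> \<theta>2) = f \<circ> (\<lambda>x. x)" using comp_inv_id[OF bh] by (simp add: fun_eq_iff)
  qed
  have c21: "\<theta>2 \<circ> \<theta>1 = (\<lambda>x. x)"
  proof (rule uniq[OF hl_hom_comp[OF t1 t2] idh])
    have "f \<circ> (\<theta>2 \<circ> \<theta>1) = inv h \<circ> (h \<circ> f)" using e1 e2 by (simp add: fun_eq_iff)
    then show "f \<circ> (\<theta>2 \<circ> \<theta>1) = f \<circ> (\<lambda>x. x)" using inv_comp_id[OF bh] by (simp add: fun_eq_iff)
  qed
  have "bij \<theta>1" using o_bij[of \<theta>2 \<theta>1] c12 c21 by (simp add: id_def)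
  then show "\<exists>\<theta>\<in>hl_Aut s' br' al'. f \<circ> \<theta> = h \<circ> f" using t1 e1 by (auto simp: hl_Aut_def)
qed

lemma ker_pres:
  assumes t: "\<theta> \<in> hl_Aut s' br' al'" and h: "h \<in> hl_Aut s br al" and e: "f \<circ> \<theta> = h \<circ> f"
  shows "\<theta> ` hl_ker f = hl_ker f"
proof
  have h0: "h 0 = 0" by (rule lin_zero[OF hl_hom_linear[OF h_hom[OF h]]])
  have ef: "f (\<theta> x) = h (f x)" for x using e by (simp add: fun_eq_iff)
  show "\<theta> ` hl_ker f \<subseteq> hl_ker f" using ef h0 by (auto simp: hl_ker_def)
  show "hl_ker f \<subseteq> \<theta> ` hl_ker f"
  proof
    fix z assume z: "z \<in> hl_ker f"
    have bt: "bij \<theta>" and bh: "bij h" using t h by (auto simp: hl_Aut_def)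
    have tz: "\<theta> (inv \<theta> z) = z" using bt by (simp add: bij_is_surj surj_f_inv_f)
    have "h (f (inv \<theta> z)) = 0" using ef[of "inv \<theta> z"] tz z by (simp add: hl_ker_def)
    then have "h (f (inv \<theta> z)) = h 0" using h0 by simp
    then have "f (inv \<theta> z) = 0" using inj_eq[OF bij_is_inj[OF bh]] by blast
    then have "inv \<theta> z \<in> hl_ker f" by (simp add: hl_ker_def)
    then show "z \<in> \<theta> ` hl_ker f" by (rule rev_image_eqI) (simp add: tz)
  qed
qed

lemma uniq_Aut:
  assumes "\<theta>1 \<in> hl_Aut s' br' al'" "\<theta>2 \<in> hl_Aut s' br' al'" "f \<circ> \<theta>1 = h \<circ> f" "f \<circ> \<theta>2 = h \<circ> f"
  shows "\<theta>1 = \<theta>2"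
  by (rule uniq) (use assms in \<open>auto simp: hl_Aut_def\<close>)


definition Theta :: "('a \<Rightarrow> 'a) \<Rightarrow> ('b \<Rightarrow> 'b)" where
  "Theta h = (THE \<theta>. \<theta> \<in> hl_Aut s' br' al' \<and> f \<circ> \<theta> = h \<circ> f)"

lemma Theta_eq:
  assumes "\<theta> \<in> hl_Aut s' br' al'" "f \<circ> \<theta> = h \<circ> f"
  shows "Theta h = \<theta>"
  unfolding Theta_def
proof (rule the_equality)
  show "\<theta> \<in> hl_Aut s' br' al' \<and> f \<circ> \<theta> = h \<circ> f" using assms by simp
  fix x assume "x \<in> hl_Aut s' br' al' \<and> f \<circ> x = h \<circ> f"
  then show "x = \<theta>" by (elim conjE) (rule uniq_Aut[OF _ assms(1) _ assms(2)])
qed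

lemma Theta_prop:
  assumes "\<exists>\<theta>\<in>hl_Aut s' br' al'. f \<circ> \<theta> = h \<circ> f"
  shows "Theta h \<in> hl_Aut s' br' al' \<and> f \<circ> Theta h = h \<circ> f"
proof -
  obtain \<theta> where t: "\<theta> \<in> hl_Aut s' br' al'" "f \<circ> \<theta> = h \<circ> f" using assms by blast
  show ?thesis using Theta_eq[OF t] t by simp
qed

lemma descend:
  assumes g: "g \<in> hl_Aut s' br' al'" and k: "g ` hl_ker f = hl_ker f"
  shows "\<exists>h. hl_hom s br al s br al h \<and> (\<forall>x. h (f x) = f (g x))"
proof -
  define h where "h y = f (g (\<iota> y))" for y
  have gh: "hl_hom s' br' al' s' br' al' g" using g by (simp add: hl_Aut_def)
  interpret G: linear s' s' g by (rule hl_hom_linear[OF gh])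
  have hf: "h (f x) = f (g x)" for x
  proof -
    have k1: "\<iota> (f x) - x \<in> hl_ker f" by (simp add: hl_ker_def F.diff)
    have "g (\<iota> (f x) - x) \<in> hl_ker f" using imageI[OF k1, of g] k by simp
    then have "f (g (\<iota> (f x))) - f (g x) = 0" by (simp add: hl_ker_def G.diff F.diff)
    then show ?thesis unfolding h_def by simp
  qed
  have "hl_hom s br al s br al h"
    unfolding hl_hom_def linear_iff
  proof (intro conjI allI)
    show "vector_space s" by (rule vs)
    show "vector_space s" by (rule vs)
    fix a b
    have "h (a + b) = h (f (\<iota> a + \<iota> b))" by (simp add: F.add)
    also have "\<dots> = f (g (\<iota> a)) + f (g (\<iota> b))" by (simp only: hf) (simp only: G.add F.add)
    finally show "h (a + b) = h a + h b" by (simp add: h_def)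
  next
    fix c a
    have "h (s c a) = h (f (s' c (\<iota> a)))" by (simp add: F.scale)
    also have "\<dots> = s c (f (g (\<iota> a)))" by (simp only: hf) (simp only: G.scale F.scale)
    finally show "h (s c a) = s c (h a)" by (simp add: h_def)
  next
    fix a b
    have "h (br a b) = h (f (br' (\<iota> a) (\<iota> b)))" by (simp add: f_br)
    also have "\<dots> = br (f (g (\<iota> a))) (f (g (\<iota> b)))" by (simp only: hf) (simp only: hl_hom_br[OF gh] f_br)
    finally show "h (br a b) = br (h a) (h b)" by (simp add: h_def)
  next
    show "h \<circ> al = al \<circ> h"
    proof
      fix a
      have "h (al a) = h (f (al' (\<iota> a)))" by (simp add: f_al)
      also have "\<dots> = al (f (g (\<iota> a)))" by (simp only: hf) (simp only: hl_hom_al[OF gh] f_al)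
      finally show "(h \<circ> al) a = (al \<circ> h) a" by (simp add: h_def)
    qed
  qed
  then show ?thesis using hf by blast
qed

lemma part3:
  "let G = {h \<in> hl_Aut s br al. uce_map al s br al h ` C0 = C0};
       G' = {g \<in> hl_Aut s' br' al'. g ` hl_ker f = hl_ker f};
       \<Theta> = (\<lambda>h. THE \<theta>. \<theta> \<in> hl_Aut s' br' al' \<and> f \<circ> \<theta> = h \<circ> f)
   in bij_betw \<Theta> G G' \<and> (\<forall>h1 \<in> G. \<forall>h2 \<in> G. \<Theta> (h1 \<circ> h2) = \<Theta> h1 \<circ> \<Theta> h2)"
proof -
  define G where "G = {h \<in> hl_Aut s br al. uce_map al s br al h ` C0 = C0}"
  define G' where "G' = {g \<in> hl_Aut s' br' al'. g ` hl_ker f = hl_ker f}"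
  have TP: "Theta h \<in> hl_Aut s' br' al' \<and> f \<circ> Theta h = h \<circ> f" if "h \<in> G" for h
  proof -
    have hA: "h \<in> hl_Aut s br al" and e: "uce_map al s br al h ` C0 = C0" using that by (auto simp: G_def)
    show ?thesis by (rule Theta_prop) (use main_iff[OF hA] e in simp)
  qed
  have inj: "inj_on Theta G"
  proof (rule inj_onI)
    fix h1 h2 assume h: "h1 \<in> G" "h2 \<in> G" "Theta h1 = Theta h2"
    have "h1 \<circ> f = f \<circ> Theta h1" using TP[OF h(1)] by simp
    also have "\<dots> = h2 \<circ> f" using TP[OF h(2)] h(3) by simp
    finally have "h1 \<circ> f = h2 \<circ> f" .
    then have "h1 (f (\<iota> y)) = h2 (f (\<iota> y))" for y by (metis comp_apply)
    then show "h1 = h2" by (simp add: fun_eq_iff)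
  qed
  have img: "Theta ` G = G'"
  proof
    show "Theta ` G \<subseteq> G'"
    proof clarify
      fix h assume h: "h \<in> G"
      have hA: "h \<in> hl_Aut s br al" using h by (simp add: G_def)
      have t: "Theta h \<in> hl_Aut s' br' al'" "f \<circ> Theta h = h \<circ> f" using TP[OF h] by auto
      show "Theta h \<in> G'" using t ker_pres[OF t(1) hA t(2)] unfolding G'_def by simp
    qed
  next
    show "G' \<subseteq> Theta ` G"
    proof
      fix g assume g: "g \<in> G'"
      have gA: "g \<in> hl_Aut s' br' al'" and gk: "g ` hl_ker f = hl_ker f" using g by (auto simp: G'_def)
      have bg: "bij g" using gA by (simp add: hl_Aut_def)
      have giA: "inv g \<in> hl_Aut s' br' al'" by (rule Aut_inv[OF gA])
      have gik: "inv g ` hl_ker f = hl_ker f"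
      proof -
        have "inv g ` hl_ker f = inv g ` g ` hl_ker f" using gk by simp
        also have "\<dots> = hl_ker f" using bg by (simp add: image_comp bij_is_inj)
        finally show ?thesis .
      qed
      obtain h where hh: "hl_hom s br al s br al h" and hf: "\<And>x. h (f x) = f (g x)"
        using descend[OF gA gk] by blast
      obtain h2 where hf2: "\<And>x. h2 (f x) = f (inv g x)"
        using descend[OF giA gik] by blast
      have c1: "h \<circ> h2 = id"
      proof
        fix y show "(h \<circ> h2) y = id y"
          using hf[of "inv g (\<iota> y)"] hf2[of "\<iota> y"] bg by (simp add: bij_is_surj surj_f_inv_f)
      qed
      have c2: "h2 \<circ> h = id"
      proof
        fix y show "(h2 \<circ> h) y = id y"
          using hf[of "\<iota> y"] hf2[of "g (\<iota> y)"] bg by (simp add: bij_is_inj)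
      qed
      have hA: "h \<in> hl_Aut s br al" using hh o_bij[OF c2 c1] by (simp add: hl_Aut_def)
      have e: "f \<circ> g = h \<circ> f" using hf by (simp add: fun_eq_iff)
      have "\<exists>\<theta>\<in>hl_Aut s' br' al'. f \<circ> \<theta> = h \<circ> f" using gA e by blast
      then have "h \<in> G" using main_iff[OF hA] hA unfolding G_def by simp
      moreover have "Theta h = g" by (rule Theta_eq[OF gA e])
      ultimately show "g \<in> Theta ` G" by (metis imageI)
    qed
  qed
  have hom: "Theta (h1 \<circ> h2) = Theta h1 \<circ> Theta h2" if "h1 \<in> G" "h2 \<in> G" for h1 h2
  proof (rule Theta_eq)
    show "Theta h1 \<circ> Theta h2 \<in> hl_Aut s' br' al'"
      using Aut_comp[of "Theta h1" s' br' al' "Theta h2"] TP[OF that(1)] TP[OF that(2)] by simp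
    have "f \<circ> Theta h1 = h1 \<circ> f" "f \<circ> Theta h2 = h2 \<circ> f" using TP that by auto
    then show "f \<circ> (Theta h1 \<circ> Theta h2) = h1 \<circ> h2 \<circ> f" by (simp add: fun_eq_iff)
  qed
  show ?thesis unfolding Let_def G_def[symmetric] G'_def[symmetric] Theta_def[symmetric]
    using bij_betw_imageI[OF inj img] hom by simp
qed

end


theorem theorem4p3:
  fixes s' :: "'k::field \<Rightarrow> 'b::ab_group_add \<Rightarrow> 'b" and br' :: "'b \<Rightarrow> 'b \<Rightarrow> 'b" and al' :: "'b \<Rightarrow> 'b"
    and s :: "'k \<Rightarrow> 'a::ab_group_add \<Rightarrow> 'a" and br :: "'a \<Rightarrow> 'a \<Rightarrow> 'a" and al :: "'a \<Rightarrow> 'a"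
    and f :: "'b \<Rightarrow> 'a"
  assumes L': "hom_leibniz s' br' al'"
    and L: "hom_leibniz s br al"
    and cover: "alpha_cover s' br' al' s br al f"
  defines "C \<equiv> uce_map al' s br al f ` uce_ker s' br' al'"
  shows
    "(\<forall>h \<in> hl_Aut s br al.
        (\<exists>\<theta> \<in> hl_Aut s' br' al'. f \<circ> \<theta> = h \<circ> f) \<longleftrightarrow> uce_map al s br al h ` C = C)
     \<and> (\<forall>h \<in> hl_Aut s br al. uce_map al s br al h ` C = C \<longrightarrow>
          (\<exists>!\<theta>. \<theta> \<in> hl_Aut s' br' al' \<and> f \<circ> \<theta> = h \<circ> f) \<and>
          (\<forall>\<theta> \<in> hl_Aut s' br' al'. f \<circ> \<theta> = h \<circ> f \<longrightarrow> \<theta> ` hl_ker f = hl_ker f))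
     \<and> (let G = {h \<in> hl_Aut s br al. uce_map al s br al h ` C = C};
            G' = {g \<in> hl_Aut s' br' al'. g ` hl_ker f = hl_ker f};
            \<Theta> = (\<lambda>h. THE \<theta>. \<theta> \<in> hl_Aut s' br' al' \<and> f \<circ> \<theta> = h \<circ> f)
        in bij_betw \<Theta> G G' \<and> (\<forall>h1 \<in> G. \<forall>h2 \<in> G. \<Theta> (h1 \<circ> h2) = \<Theta> h1 \<circ> \<Theta> h2))"
proof -
  interpret X: cov s' br' al' s br al f by (rule cov.intro[OF L' L cover])
  have CC: "C = X.C0" unfolding C_def by (rule X.C_eq)
  have p1: "\<forall>h \<in> hl_Aut s br al.
        (\<exists>\<theta> \<in> hl_Aut s' br' al'. f \<circ> \<theta> = h \<circ> f) \<longleftrightarrow> uce_map al s br al h ` X.C0 = X.C0"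
    using X.main_iff by blast
  have p2: "\<forall>h \<in> hl_Aut s br al. uce_map al s br al h ` X.C0 = X.C0 \<longrightarrow>
          (\<exists>!\<theta>. \<theta> \<in> hl_Aut s' br' al' \<and> f \<circ> \<theta> = h \<circ> f) \<and>
          (\<forall>\<theta> \<in> hl_Aut s' br' al'. f \<circ> \<theta> = h \<circ> f \<longrightarrow> \<theta> ` hl_ker f = hl_ker f)"
  proof (intro ballI impI conjI)
    fix h assume h: "h \<in> hl_Aut s br al" and e: "uce_map al s br al h ` X.C0 = X.C0"
    obtain \<theta> where t: "\<theta> \<in> hl_Aut s' br' al'" "f \<circ> \<theta> = h \<circ> f" using X.main_iff[OF h] e by blast
    show "\<exists>!\<theta>. \<theta> \<in> hl_Aut s' br' al' \<and> f \<circ> \<theta> = h \<circ> f"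
    proof (rule ex1I[of _ \<theta>])
      show "\<theta> \<in> hl_Aut s' br' al' \<and> f \<circ> \<theta> = h \<circ> f" using t by simp
      fix y assume "y \<in> hl_Aut s' br' al' \<and> f \<circ> y = h \<circ> f"
      then show "y = \<theta>" by (elim conjE) (rule X.uniq_Aut[OF _ t(1) _ t(2)])
    qed
    fix \<theta>' assume "\<theta>' \<in> hl_Aut s' br' al'" "f \<circ> \<theta>' = h \<circ> f"
    then show "\<theta>' ` hl_ker f = hl_ker f" using X.ker_pres h by blast
  qed
  show ?thesis unfolding CC using p1 p2 X.part3 by simp
qed

end
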